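(* Fix $d\ge 1$. There is a constant $c_d$ depending only on $d$ such that for every 2-dimensional binary matrix $X$ and every partition $\{x_i\}$ of $X$ into sub-matrices of size at most $d\times d$, $$\big|BDM_{\{x_i\}}(X)-H_{\{x_i\}}(X)\big|\le c_d\log(|\{x_i\}|),$$ that is, $|BDM_{\{x_i\}}(X)-H_{\{x_i\}}(X)|=O(\log|\{x_i\}|)$.
   Context: For a partition $\{x_i\}$ of $X$, $|\{x_i\}|$ is the number of blocks, and $Adj(X)_{\{x_i\}}$ is the set of pairs $(r_j,n_j)$ with $r_j$ the distinct blocks and $n_j$ the number of blocks equal to $r_j$ (so $\sum_j n_j=|\{x_i\}|$). $CTM(s)=-\log_2 D(t,k)(s)$, where $D(t,k)(s)$ is the fraction of halting $t$-state $k$-symbol (2-dimensional) Turing machines started on an empty tape that output $s$; CTM values are assumed available (finite) for all binary matrices of size at most $d\times d$. $BDM_{\{x_i\}}(X)=\sum_{(r_j,n_j)\in Adj(X)_{\{x_i\}}}(CTM(r_j)+\log_2 n_j)$. The block Shannon entropy is $H_{\{x_i\}}(X)=-\sum_{(r_j,n_j)\in Adj(X)_{\{x_i\}}}\frac{n_j}{|\{x_i\}|}\log_2\frac{n_j}{|\{x_i\}|}$, each block $r_j$ being treated as a symbol. *)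

theory Defs
  imports Complex_Main
begin

type_synonym bmat = "bool list list"

definition is_bmatrix :: "bmat \<Rightarrow> bool" where
  "is_bmatrix X \<longleftrightarrow> (\<forall>row \<in> set X. length row = length (hd X))"

definition nrows :: "bmat \<Rightarrow> nat" where "nrows X = length X"
definition ncols :: "bmat \<Rightarrow> nat" where "ncols X = (if X = [] then 0 else length (hd X))"

text \<open>A rectangle (i, j, h, w): top-left cell (row i, column j), height h, width w.\<close>
type_synonym rect = "nat \<times> nat \<times> nat \<times> nat"

definition rect_cells :: "rect \<Rightarrow> (nat \<times> nat) set" where
  "rect_cells R = (case R of (i, j, h, w) \<Rightarrow>
     {(r, c). i \<le> r \<and> r < i + h \<and> j \<le> c \<and> c < j + w})"

definition submatrix :: "bmat \<Rightarrow> rect \<Rightarrow> bmat" where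
  "submatrix X R = (case R of (i, j, h, w) \<Rightarrow>
     map (\<lambda>row. take w (drop j row)) (take h (drop i X)))"

definition is_block_partition :: "nat \<Rightarrow> bmat \<Rightarrow> rect set \<Rightarrow> bool" where
  "is_block_partition d X P \<longleftrightarrow>
     finite P \<and>
     (\<forall>R \<in> P. case R of (i, j, h, w) \<Rightarrow>
         1 \<le> h \<and> h \<le> d \<and> 1 \<le> w \<and> w \<le> d \<and> i + h \<le> nrows X \<and> j + w \<le> ncols X) \<and>
     (\<forall>R \<in> P. \<forall>R' \<in> P. R \<noteq> R' \<longrightarrow> rect_cells R \<inter> rect_cells R' = {}) \<and>
     (\<Union>R \<in> P. rect_cells R) = {..<nrows X} \<times> {..<ncols X}"

definition blocks :: "bmat \<Rightarrow> rect set \<Rightarrow> bmat set" where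
  "blocks X P = submatrix X ` P"

definition mult :: "bmat \<Rightarrow> rect set \<Rightarrow> bmat \<Rightarrow> nat" where
  "mult X P r = card {R \<in> P. submatrix X R = r}"

definition BDM :: "(bmat \<Rightarrow> real) \<Rightarrow> bmat \<Rightarrow> rect set \<Rightarrow> real" where
  "BDM ctm X P = (\<Sum>r \<in> blocks X P. ctm r + log 2 (real (mult X P r)))"

definition block_entropy :: "bmat \<Rightarrow> rect set \<Rightarrow> real" where
  "block_entropy X P = - (\<Sum>r \<in> blocks X P.
      (real (mult X P r) / real (card P)) * log 2 (real (mult X P r) / real (card P)))"

end

theory Submission
  imports Defs
begin

definition SS :: "nat \<Rightarrow> bmat set" where
  "SS d = {xs. set xs \<subseteq> {ys::bool list. set ys \<subseteq> UNIV \<and> length ys \<le> d} \<and> length xs \<le> d}"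

lemma finite_SS: "finite (SS d)"
  unfolding SS_def by (intro finite_lists_length_le finite_lists_length_le) auto

lemma blocks_SS:
  assumes "is_block_partition d X P"
  shows "blocks X P \<subseteq> SS d"
proof
  fix r assume "r \<in> blocks X P"
  then obtain i j h w where R: "(i,j,h,w) \<in> P" and r: "r = submatrix X (i,j,h,w)"
    unfolding blocks_def by auto
  from assms R have "h \<le> d" "w \<le> d" unfolding is_block_partition_def by auto
  then show "r \<in> SS d" unfolding r submatrix_def SS_def by auto
qed

lemma term_bound:
  fixes m N :: nat and a :: real
  assumes "1 \<le> m" "m \<le> N"
  shows "\<bar>a + log 2 (real m) + (real m / real N) * log 2 (real m / real N)\<bar>
         \<le> \<bar>a\<bar> + 2 * log 2 (real N)"
proof -
  have N0: "real N > 0" using assms by simp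
  have l1: "0 \<le> log 2 (real m)" using assms by simp
  have l2: "log 2 (real m) \<le> log 2 (real N)" using assms by simp
  have p0: "0 < real m / real N" using assms N0 by simp
  have p1: "real m / real N \<le> 1" using assms N0 by simp
  have lp: "log 2 (real m / real N) = log 2 (real m) - log 2 (real N)"
    using assms by (simp add: log_divide)
  have q1: "log 2 (real m / real N) \<le> 0" using lp l2 by simp
  have q2: "- log 2 (real N) \<le> log 2 (real m / real N)" using lp l1 by simp
  have "\<bar>(real m / real N) * log 2 (real m / real N)\<bar> \<le> 1 * log 2 (real N)"
  proof -
    have "\<bar>(real m / real N) * log 2 (real m / real N)\<bar> = (real m / real N) * (- log 2 (real m / real N))"
      using p0 q1 by (simp add: abs_mult)
    also have "\<dots> \<le> 1 * log 2 (real N)"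
      by (rule mult_mono) (use p1 q1 q2 in auto)
    finally show ?thesis .
  qed
  then show ?thesis using l1 l2
    by (smt (verit) abs_triangle_ineq)
qed

theorem proposition2:
  fixes ctm :: "bmat \<Rightarrow> real" and d :: nat
  assumes "d \<ge> 1"
  shows "\<exists>c::real. \<forall>X P. is_bmatrix X \<longrightarrow> is_block_partition d X P \<longrightarrow> card P \<ge> 2 \<longrightarrow>
           \<bar>BDM ctm X P - block_entropy X P\<bar> \<le> c * log 2 (real (card P))"
proof (intro exI allI impI)
  fix X P
  assume "is_bmatrix X" and bp: "is_block_partition d X P" and N2: "card P \<ge> 2"
  define N where "N = card P"
  define M where "M = (\<Sum>r\<in>SS d. \<bar>ctm r\<bar>)"
  have fin: "finite P" using bp unfolding is_block_partition_def by auto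
  have fb: "finite (blocks X P)" using fin unfolding blocks_def by auto
  have sub: "blocks X P \<subseteq> SS d" by (rule blocks_SS[OF bp])
  have logN: "1 \<le> log 2 (real N)" using N2 unfolding N_def by simp
  have mb: "1 \<le> mult X P r \<and> mult X P r \<le> N" if "r \<in> blocks X P" for r
  proof
    from that obtain R where "R \<in> P" "submatrix X R = r" unfolding blocks_def by auto
    then have "{R \<in> P. submatrix X R = r} \<noteq> {}" by blast
    then show "1 \<le> mult X P r" unfolding mult_def using fin
      by (simp add: Suc_le_eq card_gt_0_iff)
    show "mult X P r \<le> N" unfolding mult_def N_def using fin by (intro card_mono) auto
  qed
  have eq: "BDM ctm X P - block_entropy X P =
     (\<Sum>r\<in>blocks X P. ctm r + log 2 (real (mult X P r)) +
        (real (mult X P r) / real N) * log 2 (real (mult X P r) / real N))"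
    unfolding BDM_def block_entropy_def N_def by (simp add: sum.distrib)
  have "\<bar>BDM ctm X P - block_entropy X P\<bar> \<le>
     (\<Sum>r\<in>blocks X P. \<bar>ctm r + log 2 (real (mult X P r)) +
        (real (mult X P r) / real N) * log 2 (real (mult X P r) / real N)\<bar>)"
    unfolding eq by (rule sum_abs)
  also have "\<dots> \<le> (\<Sum>r\<in>blocks X P. \<bar>ctm r\<bar> + 2 * log 2 (real N))"
    by (rule sum_mono) (use mb term_bound in blast)
  also have "\<dots> \<le> (\<Sum>r\<in>SS d. \<bar>ctm r\<bar> + 2 * log 2 (real N))"
    by (rule sum_mono2[OF finite_SS sub]) (use logN in auto)
  also have "\<dots> = M + real (card (SS d)) * (2 * log 2 (real N))"
    unfolding M_def by (simp add: sum.distrib)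
  also have "\<dots> \<le> M * log 2 (real N) + real (card (SS d)) * (2 * log 2 (real N))"
  proof -
    have "M \<ge> 0" unfolding M_def by (intro sum_nonneg) auto
    then have "M * 1 \<le> M * log 2 (real N)" using logN by (intro mult_left_mono) auto
    then show ?thesis by simp
  qed
  also have "\<dots> = (M + 2 * real (card (SS d))) * log 2 (real (card P))"
    unfolding N_def by (simp add: algebra_simps)
  finally show "\<bar>BDM ctm X P - block_entropy X P\<bar> \<le>
     ((\<Sum>r\<in>SS d. \<bar>ctm r\<bar>) + 2 * real (card (SS d))) * log 2 (real (card P))"
    unfolding M_def .
qed

end
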